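(* Let $pqr$ be a non-degenerate triangle in $\mathbb{R}^2$ and let $\tau(p),\tau(q),\tau(r)$ be real numbers with $\tau(p)\le\tau(q)\le\tau(r)$. Let $\sigma>0$ and suppose $\|\nabla\tau\|<\sigma$. Let $0<\varepsilon<1$ and $d_p:=\operatorname{dist}(p,\operatorname{aff}(qr))$. For $\delta\ge0$ let $\tau'_\delta$ denote the affine function on $\mathbb{R}^2$ with $\tau'_\delta(p)=\tau(p)+\delta$, $\tau'_\delta(q)=\tau(q)$, $\tau'_\delta(r)=\tau(r)$. (1) If $\angle pqr\le\pi/2$ and $\frac{\tau(r)-\tau(q)}{|qr|}\le(1-\varepsilon)\sigma$, then $\|\nabla\tau'_\delta\|<\sigma$ for every $\delta\in[0,\varepsilon\, d_p\,\sigma]$. (2) If $\pi/2<\angle pqr<\pi$ and $\frac{\tau(r)-\tau(q)}{|qr|}\le(1-\varepsilon)\,\sigma\,\sin\angle pqr$, then $\|\nabla\tau'_\delta\|<\sigma$ for every $\delta\in[0,\varepsilon\, d_p\,\sigma]$.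
   Context: Given real values at the three vertices of a triangle, $\tau$ also denotes the unique affine function $\mathbb{R}^2\to\mathbb{R}$ interpolating them, and $\nabla\tau\in\mathbb{R}^2$ is its (constant) gradient with Euclidean norm $\|\nabla\tau\|$. $\operatorname{aff}(qr)$ is the line through $q$ and $r$, and $|qr|$ the length of segment $qr$. *)

theory Defs
  imports "HOL-Analysis.Analysis"
begin

definition tri_grad :: "real^2 \<Rightarrow> real^2 \<Rightarrow> real^2 \<Rightarrow> real \<Rightarrow> real \<Rightarrow> real \<Rightarrow> real^2" where
  "tri_grad p q r a b c =
     (THE g. \<exists>k. g \<bullet> p + k = a \<and> g \<bullet> q + k = b \<and> g \<bullet> r + k = c)"

definition vertex_angle :: "real^2 \<Rightarrow> real^2 \<Rightarrow> real^2 \<Rightarrow> real" where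
  "vertex_angle p q r = arccos (((p - q) \<bullet> (r - q)) / (norm (p - q) * norm (r - q)))"

end

theory Submission
  imports Defs
begin

definition perp :: "real^2 \<Rightarrow> real^2" where "perp e = vector [-(e$2), e$1]"

lemma inner2: "(x::real^2) \<bullet> y = x$1 * y$1 + x$2 * y$2"
  by (simp add: inner_vec_def sum_2)

lemma perp_simps: "perp e \<bullet> e = 0" "perp e \<bullet> perp e = e \<bullet> e" "x \<bullet> perp e = - (e \<bullet> perp x)"
  by (auto simp: perp_def inner2 algebra_simps)

lemma decomp: "(e \<bullet> e) *\<^sub>R (x::real^2) = (x \<bullet> e) *\<^sub>R e + (x \<bullet> perp e) *\<^sub>R perp e"
  by (simp add: vec_eq_iff forall_2 perp_def inner2 algebra_simps)

lemma bilin: "(e \<bullet> e) * ((x::real^2) \<bullet> y) = (x \<bullet> e) * (y \<bullet> e) + (x \<bullet> perp e) * (y \<bullet> perp e)"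
  by (simp add: perp_def inner2 algebra_simps)

lemma noncol:
  assumes "\<not> collinear {p, q, r::real^2}"
  shows "r - q \<noteq> 0" "(p - q) \<bullet> perp (r - q) \<noteq> 0"
proof -
  have nc: "\<not> collinear {0, p - q, r - q}" using assms collinear_3[of p q r]
    by (simp add: NO_MATCH_def)
  then show "r - q \<noteq> 0" by (auto simp: collinear_lemma)
  show "(p - q) \<bullet> perp (r - q) \<noteq> 0"
  proof
    assume h: "(p - q) \<bullet> perp (r - q) = 0"
    define P where "P = p - q"
    define e where "e = r - q"
    have P0: "P \<noteq> 0" using nc P_def by (auto simp: collinear_lemma)
    have "e \<bullet> perp P = 0" using h perp_simps(3)[of P e] P_def e_def by simp
    hence "(P \<bullet> P) *\<^sub>R e = (e \<bullet> P) *\<^sub>R P" using decomp[of P e] by simp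
    moreover have "e = (1/(P \<bullet> P)) *\<^sub>R ((P \<bullet> P) *\<^sub>R e)" using P0 by simp
    ultimately have "e = ((e \<bullet> P) / (P \<bullet> P)) *\<^sub>R P" by simp
    thus False using nc P_def e_def by (auto simp: collinear_lemma)
  qed
qed

lemma tri_grad_eqs:
  assumes nc: "\<not> collinear {p, q, r::real^2}"
  shows "tri_grad p q r a b c \<bullet> (r - q) = c - b" "tri_grad p q r a b c \<bullet> (p - q) = a - b"
proof -
  define e where "e = r - q"
  define P where "P = p - q"
  define s0 where "s0 = P \<bullet> perp e"
  define E where "E = e \<bullet> e"
  have s0: "s0 \<noteq> 0" using noncol[OF nc] s0_def P_def e_def by simp
  have E: "E > 0" using noncol[OF nc] E_def e_def by simp
  define Q where "Q = (\<lambda>g::real^2. \<exists>k. g \<bullet> p + k = a \<and> g \<bullet> q + k = b \<and> g \<bullet> r + k = c)"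
  have Qeq: "Q g \<longleftrightarrow> g \<bullet> e = c - b \<and> g \<bullet> P = a - b" for g
    unfolding Q_def e_def P_def
  proof
    assume "\<exists>k. g \<bullet> p + k = a \<and> g \<bullet> q + k = b \<and> g \<bullet> r + k = c"
    then obtain k where "g \<bullet> p + k = a" "g \<bullet> q + k = b" "g \<bullet> r + k = c" by blast
    thus "g \<bullet> (r - q) = c - b \<and> g \<bullet> (p - q) = a - b" by (simp add: inner_diff_right)
  next
    assume "g \<bullet> (r - q) = c - b \<and> g \<bullet> (p - q) = a - b"
    thus "\<exists>k. g \<bullet> p + k = a \<and> g \<bullet> q + k = b \<and> g \<bullet> r + k = c"
      by (intro exI[of _ "b - g \<bullet> q"]) (simp add: inner_diff_right)
  qed
  define g0 where "g0 = ((c-b)/E) *\<^sub>R e + (((a-b) - (c-b)*(P \<bullet> e)/E)/s0) *\<^sub>R perp e"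
  have g0e: "g0 \<bullet> e = c - b" using E unfolding g0_def
    by (simp add: inner_add_left perp_simps E_def)
  have g0P: "g0 \<bullet> P = a - b" using E s0 unfolding g0_def
    by (simp add: inner_add_left inner_commute[of e P] inner_commute[of "perp e" P] s0_def[symmetric] field_simps)
  have "Q g0" using Qeq g0e g0P by blast
  moreover have "g = g0" if "Q g" for g
  proof -
    define x where "x = g - g0"
    have "x \<bullet> e = 0" "x \<bullet> P = 0" using that \<open>Q g0\<close> unfolding Qeq x_def by (auto simp: inner_diff_left)
    moreover have "E * (x \<bullet> P) = (x \<bullet> e) * (P \<bullet> e) + (x \<bullet> perp e) * (P \<bullet> perp e)"
      using bilin E_def by blast
    ultimately have "x \<bullet> perp e = 0" using s0 s0_def by simp
    hence "E *\<^sub>R x = 0" using decomp[of e x] \<open>x \<bullet> e = 0\<close> E_def by simp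
    thus ?thesis using E x_def by simp
  qed
  ultimately have "\<exists>!g. Q g" by blast
  hence "Q (THE g. Q g)" by (rule theI')
  hence "Q (tri_grad p q r a b c)" unfolding tri_grad_def Q_def .
  hence "tri_grad p q r a b c \<bullet> e = c - b \<and> tri_grad p q r a b c \<bullet> P = a - b" by (simp only: Qeq)
  thus "tri_grad p q r a b c \<bullet> (r - q) = c - b" "tri_grad p q r a b c \<bullet> (p - q) = a - b"
    by (simp_all only: e_def P_def)
qed

lemma real_core:
  fixes a B t \<alpha> \<beta> \<sigma> \<epsilon> :: real
  assumes a: "a \<ge> 0" and bet: "\<beta> > 0" and g: "a\<^sup>2 + B\<^sup>2 < \<sigma>\<^sup>2" and P: "a * \<alpha> + B * \<beta> \<le> 0"
    and t: "0 \<le> t" "t \<le> \<epsilon> * \<sigma>" and eps: "0 < \<epsilon>" "\<epsilon> < 1" and sig: "\<sigma> > 0"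
    and cases: "(\<alpha> \<ge> 0 \<and> a \<le> (1-\<epsilon>)*\<sigma>) \<or> (\<alpha> < 0 \<and> a \<le> (1-\<epsilon>)*\<sigma>*(\<beta> / sqrt (\<alpha>\<^sup>2+\<beta>\<^sup>2)))"
  shows "a\<^sup>2 + (B + t)\<^sup>2 < \<sigma>\<^sup>2"
proof (cases "B + t \<le> 0")
  case True
  hence "(B+t)\<^sup>2 \<le> B\<^sup>2" using t by (simp add: abs_le_square_iff[symmetric]) 
  thus ?thesis using g by linarith
next
  case False
  hence pos: "0 < B + t" by simp
  show ?thesis using cases
  proof
    assume h: "\<alpha> \<ge> 0 \<and> a \<le> (1-\<epsilon>)*\<sigma>"
    have "B * \<beta> \<le> 0" using P h a by (smt (verit) mult_nonneg_nonneg)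
    hence "B \<le> 0" using bet by (simp add: mult_le_0_iff)
    hence "B + t \<le> \<epsilon> * \<sigma>" using t by linarith
    hence 1: "(B+t)\<^sup>2 \<le> (\<epsilon>*\<sigma>)\<^sup>2" using pos by (intro power_mono) auto
    have 2: "a\<^sup>2 \<le> ((1-\<epsilon>)*\<sigma>)\<^sup>2" using h a by (intro power_mono) auto
    have "((1-\<epsilon>)*\<sigma>)\<^sup>2 + (\<epsilon>*\<sigma>)\<^sup>2 = \<sigma>\<^sup>2 - 2*\<epsilon>*(1-\<epsilon>)*\<sigma>\<^sup>2"
      by (simp add: power2_eq_square algebra_simps)
    moreover have "2*\<epsilon>*(1-\<epsilon>)*\<sigma>\<^sup>2 > 0" using eps sig by simp
    ultimately show ?thesis using 1 2 by linarith
  next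
    assume h: "\<alpha> < 0 \<and> a \<le> (1-\<epsilon>)*\<sigma>*(\<beta> / sqrt (\<alpha>\<^sup>2+\<beta>\<^sup>2))"
    define R where "R = sqrt (\<alpha>\<^sup>2+\<beta>\<^sup>2)"
    have R: "R > 0" using bet R_def by (simp add: add_nonneg_pos)
    have RR: "R\<^sup>2 = \<alpha>\<^sup>2+\<beta>\<^sup>2" unfolding R_def by simp
    define c where "c = -\<alpha>/R"
    define s where "s = \<beta>/R"
    have c0: "c > 0" using h R c_def by (simp add: divide_neg_pos)
    have cs: "c\<^sup>2 + s\<^sup>2 = 1" using R RR bet unfolding c_def s_def by (simp add: power_divide add_divide_distrib[symmetric])
    have s0: "s > 0" using bet R s_def by simp
    have c1: "c < 1" using cs s0 c0
      by (smt (verit) power_less_one_iff zero_less_power)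
    have ha: "a \<le> (1-\<epsilon>)*\<sigma>* s" using h R_def s_def by simp
    have "B * \<beta> \<le> a * (-\<alpha>)" using P by simp
    hence B1: "B \<le> a * (-\<alpha>) / \<beta>" using bet by (simp add: field_simps)
    have "a * (-\<alpha>) / \<beta> = a * c / s" unfolding c_def s_def using R bet by (simp add: field_simps)
    also have "\<dots> \<le> (1-\<epsilon>)*\<sigma>* s * c / s" using ha c0 s0
      by (intro divide_right_mono mult_right_mono) auto
    also have "\<dots> = (1-\<epsilon>)*\<sigma>*c" using s0 by simp
    finally have "B + t \<le> (1-\<epsilon>)*\<sigma>*c + \<epsilon>*\<sigma>" using B1 t by linarith
    hence 1: "(B+t)\<^sup>2 \<le> ((1-\<epsilon>)*\<sigma>*c + \<epsilon>*\<sigma>)\<^sup>2" using pos by (intro power_mono) auto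
    have 2: "a\<^sup>2 \<le> ((1-\<epsilon>)*\<sigma>* s)\<^sup>2" using ha a by (intro power_mono) auto
    have "((1-\<epsilon>)*\<sigma>* s)\<^sup>2 + ((1-\<epsilon>)*\<sigma>*c + \<epsilon>*\<sigma>)\<^sup>2
        = \<sigma>\<^sup>2 * ((1-\<epsilon>)\<^sup>2 * (c\<^sup>2 + s\<^sup>2) + 2*\<epsilon>*(1-\<epsilon>)*c + \<epsilon>\<^sup>2)"
      by (simp add: power2_eq_square algebra_simps)
    also have "\<dots> = \<sigma>\<^sup>2 - \<sigma>\<^sup>2 * (2*\<epsilon>*(1-\<epsilon>)*(1-c))" using cs
      by (simp add: power2_eq_square algebra_simps)
    finally have 3: "((1-\<epsilon>)*\<sigma>* s)\<^sup>2 + ((1-\<epsilon>)*\<sigma>*c + \<epsilon>*\<sigma>)\<^sup>2 = \<sigma>\<^sup>2 - \<sigma>\<^sup>2 * (2*\<epsilon>*(1-\<epsilon>)*(1-c))" .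
    have "\<sigma>\<^sup>2 * (2*\<epsilon>*(1-\<epsilon>)*(1-c)) > 0" using eps sig c1 by simp
    thus ?thesis using 1 2 3 by linarith
  qed
qed

lemma main_aux:
  fixes p q r :: "real^2" and tp tq tr \<sigma> \<epsilon> \<delta> :: real
  assumes nondeg: "\<not> collinear {p, q, r}"
    and ord: "tp \<le> tq" "tq \<le> tr"
    and sig: "\<sigma> > 0"
    and grad: "norm (tri_grad p q r tp tq tr) < \<sigma>"
    and eps: "0 < \<epsilon>" "\<epsilon> < 1"
    and del: "0 \<le> \<delta>" "\<delta> \<le> \<epsilon> * infdist p (affine hull {q, r}) * \<sigma>"
    and cases: "(vertex_angle p q r \<le> pi / 2 \<and> (tr - tq) / dist q r \<le> (1 - \<epsilon>) * \<sigma>) \<or>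
     (pi / 2 < vertex_angle p q r \<and>
      (tr - tq) / dist q r \<le> (1 - \<epsilon>) * \<sigma> * sin (vertex_angle p q r))"
  shows "norm (tri_grad p q r (tp + \<delta>) tq tr) < \<sigma>"
proof -
  define e where "e = r - q"
  define P where "P = p - q"
  define E where "E = e \<bullet> e"
  define L where "L = norm e"
  define s0 where "s0 = P \<bullet> perp e"
  define w where "w = (if s0 \<ge> 0 then perp e else - perp e)"
  define g where "g = tri_grad p q r tp tq tr"
  define g' where "g' = tri_grad p q r (tp + \<delta>) tq tr"
  have s0: "s0 \<noteq> 0" using noncol[OF nondeg] s0_def P_def e_def by simp
  have L: "L > 0" using noncol[OF nondeg] L_def e_def by simp
  have EL: "E = L\<^sup>2" unfolding E_def L_def by (simp add: power2_norm_eq_inner)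
  have bw: "E * (x \<bullet> y) = (x \<bullet> e) * (y \<bullet> e) + (x \<bullet> w) * (y \<bullet> w)" for x y
    using bilin[of e x y] unfolding E_def w_def by auto
  have Pw: "P \<bullet> w = \<bar>s0\<bar>" unfolding w_def s0_def by auto
  have bl: "x \<bullet> y = ((x \<bullet> e)/L) * ((y \<bullet> e)/L) + ((x \<bullet> w)/L) * ((y \<bullet> w)/L)" for x y
  proof -
    have "L\<^sup>2 * (x \<bullet> y) = L\<^sup>2 * (((x \<bullet> e)/L) * ((y \<bullet> e)/L) + ((x \<bullet> w)/L) * ((y \<bullet> w)/L))"
      using bw[of x y] EL L by (simp add: field_simps power2_eq_square)
    thus ?thesis using L by simp
  qed
  define a where "a = (g \<bullet> e)/L"
  define B where "B = (g \<bullet> w)/L"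
  define B' where "B' = (g' \<bullet> w)/L"
  define \<alpha> where "\<alpha> = (P \<bullet> e)/L"
  define \<beta> where "\<beta> = \<bar>s0\<bar>/L"
  have bet: "\<beta> > 0" using s0 L \<beta>_def by simp
  have ge: "g \<bullet> e = tr - tq" "g \<bullet> P = tp - tq" "g' \<bullet> e = tr - tq" "g' \<bullet> P = tp + \<delta> - tq"
    using tri_grad_eqs[OF nondeg] unfolding g_def g'_def e_def P_def by auto
  have a0: "a \<ge> 0" using ge ord L a_def by simp
  have ng: "(norm g)\<^sup>2 = a\<^sup>2 + B\<^sup>2" unfolding power2_norm_eq_inner bl[of g g] a_def B_def
    by (simp add: power2_eq_square)
  have ng': "(norm g')\<^sup>2 = a\<^sup>2 + B'\<^sup>2" unfolding power2_norm_eq_inner bl[of g' g'] a_def B'_def ge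
    by (simp add: power2_eq_square)
  have gP: "a * \<alpha> + B * \<beta> \<le> 0" using bl[of g P] ge ord unfolding a_def B_def \<alpha>_def \<beta>_def Pw
    by simp
  have "tp + \<delta> - tq = a * \<alpha> + B' * \<beta>" using bl[of g' P] ge unfolding a_def B'_def \<alpha>_def \<beta>_def Pw
    by simp
  hence "\<delta> = (B' - B) * \<beta>" using bl[of g P] ge unfolding a_def B_def \<alpha>_def \<beta>_def Pw
    by (simp add: algebra_simps)
  hence tdef: "B' - B = \<delta> / \<beta>" using bet by simp
  define c where "c = (P \<bullet> e) / E"
  have mem: "q + c *\<^sub>R e \<in> affine hull {q, r}"
    unfolding affine_hull_2 e_def
    by (rule CollectI, rule exI[of _ "1 - c"], rule exI[of _ c]) (simp add: algebra_simps)
  have "(norm (P - c *\<^sub>R e))\<^sup>2 = \<beta>\<^sup>2"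
  proof -
    have "(P - c *\<^sub>R e) \<bullet> e = 0" using L EL unfolding c_def by (simp add: inner_diff_left E_def[symmetric])
    moreover have "e \<bullet> w = 0" unfolding w_def using perp_simps(1)[of e] by (simp add: inner_commute)
    ultimately have "(P - c *\<^sub>R e) \<bullet> w = \<bar>s0\<bar>" using Pw by (simp add: inner_diff_left)
    thus ?thesis using bl[of "P - c *\<^sub>R e" "P - c *\<^sub>R e"] \<open>(P - c *\<^sub>R e) \<bullet> e = 0\<close>
      unfolding power2_norm_eq_inner \<beta>_def by (simp add: power2_eq_square)
  qed
  hence "norm (P - c *\<^sub>R e) = \<beta>" using bet by (simp add: power2_eq_iff_nonneg)
  hence "dist p (q + c *\<^sub>R e) = \<beta>" unfolding dist_norm P_def by (simp add: algebra_simps)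
  hence inf: "infdist p (affine hull {q, r}) \<le> \<beta>" using infdist_le[OF mem, of p] by simp
  have t0: "0 \<le> \<delta> / \<beta>" using del bet by simp
  have "\<epsilon> * infdist p (affine hull {q, r}) * \<sigma> \<le> \<epsilon> * \<beta> * \<sigma>"
    using inf eps sig by (intro mult_right_mono mult_left_mono) auto
  hence "\<delta> \<le> \<epsilon> * \<sigma> * \<beta>" using del(2) by (simp add: mult_ac)
  hence t1: "\<delta> / \<beta> \<le> \<epsilon> * \<sigma>" using bet by (simp add: divide_le_eq)
  define R where "R = sqrt (\<alpha>\<^sup>2 + \<beta>\<^sup>2)"
  have R: "R > 0" using bet R_def by (simp add: add_nonneg_pos)
  have nP: "norm P = R"
  proof -
    have "(norm P)\<^sup>2 = \<alpha>\<^sup>2 + \<beta>\<^sup>2" unfolding power2_norm_eq_inner bl[of P P] \<alpha>_def \<beta>_def Pw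
      by (simp add: power2_eq_square)
    from real_sqrt_unique[OF this norm_ge_zero] show ?thesis unfolding R_def by simp
  qed
  define x where "x = \<alpha> / R"
  have va: "vertex_angle p q r = arccos x"
    unfolding vertex_angle_def x_def \<alpha>_def P_def[symmetric] e_def[symmetric] nP L_def[symmetric]
    by (simp add: mult.commute)
  have x1: "\<bar>x\<bar> \<le> 1"
  proof -
    have cs: "\<bar>P \<bullet> e\<bar> \<le> R * L" using Cauchy_Schwarz_ineq2[of P e] nP L_def by simp
    have "\<bar>\<alpha>\<bar> = \<bar>P \<bullet> e\<bar> / L" unfolding \<alpha>_def using L by (simp add: abs_divide)
    also have "\<dots> \<le> R" using cs L by (simp only: pos_divide_le_eq)
    finally have "\<bar>\<alpha>\<bar> \<le> R" .
    moreover have "\<bar>x\<bar> = \<bar>\<alpha>\<bar> / R" unfolding x_def using R by (simp add: abs_divide)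
    ultimately show ?thesis using R by (simp only: pos_divide_le_eq mult_1)
  qed
  have gs: "a\<^sup>2 + B\<^sup>2 < \<sigma>\<^sup>2" using ng power_strict_mono[OF grad norm_ge_zero, of 2]
    unfolding g_def by simp
  have "dist q r = L" unfolding L_def e_def dist_norm by (simp add: norm_minus_commute)
  hence adq: "(tr - tq) / dist q r = a" unfolding a_def using ge(1) by simp
  have cc: "(\<alpha> \<ge> 0 \<and> a \<le> (1-\<epsilon>)*\<sigma>) \<or> (\<alpha> < 0 \<and> a \<le> (1-\<epsilon>)*\<sigma>*(\<beta> / sqrt (\<alpha>\<^sup>2+\<beta>\<^sup>2)))"
    using cases
  proof
    assume h: "vertex_angle p q r \<le> pi / 2 \<and> (tr - tq) / dist q r \<le> (1 - \<epsilon>) * \<sigma>"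
    have x1': "- 1 \<le> x" "x \<le> 1" using x1 by auto
    have "0 \<le> arccos x" using arccos_lbound[OF x1'] .
    hence "0 \<le> cos (arccos x)" using h va pi_gt_zero
      by (intro cos_ge_zero) linarith+
    hence "x \<ge> 0" using x1 by simp
    hence "\<alpha> \<ge> 0" using R x_def by (simp add: zero_le_divide_iff)
    thus ?thesis using h adq by simp
  next
    assume h: "pi / 2 < vertex_angle p q r \<and>
      (tr - tq) / dist q r \<le> (1 - \<epsilon>) * \<sigma> * sin (vertex_angle p q r)"
    have "x < 0" using h va x1 arccos_le_pi2[of x] by (cases "x \<ge> 0") auto
    hence "\<alpha> < 0" using R x_def by (simp add: divide_less_0_iff)
    moreover have "sin (arccos x) = \<beta> / R"
    proof -
      have RR: "R\<^sup>2 = \<alpha>\<^sup>2 + \<beta>\<^sup>2" unfolding R_def by simp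
      have nz: "\<alpha>\<^sup>2 + \<beta>\<^sup>2 \<noteq> 0" using bet by (simp add: add_nonneg_pos)
      have "1 - x\<^sup>2 = (\<beta> / R)\<^sup>2" unfolding x_def power_divide RR using nz
        by (simp add: field_simps)
      thus ?thesis using sin_arccos_abs[OF x1] bet R by simp
    qed
    ultimately show ?thesis using h adq va R_def by simp
  qed
  have "a\<^sup>2 + (B + \<delta>/\<beta>)\<^sup>2 < \<sigma>\<^sup>2"
    by (rule real_core[OF a0 bet gs gP t0 t1 eps sig cc])
  hence "(norm g')\<^sup>2 < \<sigma>\<^sup>2" using ng' tdef by (simp add: algebra_simps)
  hence "norm g' < \<sigma>" using sig power_less_imp_less_base[of "norm g'" 2 \<sigma>] by simp
  thus ?thesis unfolding g'_def .
qed

theorem mainTheorem3: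
  fixes p q r :: "real^2" and tp tq tr \<sigma> \<epsilon> :: real
  assumes nondeg: "\<not> collinear {p, q, r}"
    and ord: "tp \<le> tq" "tq \<le> tr"
    and sig: "\<sigma> > 0"
    and grad: "norm (tri_grad p q r tp tq tr) < \<sigma>"
    and eps: "0 < \<epsilon>" "\<epsilon> < 1"
  shows
    "(vertex_angle p q r \<le> pi / 2 \<and> (tr - tq) / dist q r \<le> (1 - \<epsilon>) * \<sigma> \<longrightarrow>
        (\<forall>\<delta>. 0 \<le> \<delta> \<and> \<delta> \<le> \<epsilon> * infdist p (affine hull {q, r}) * \<sigma> \<longrightarrow>
           norm (tri_grad p q r (tp + \<delta>) tq tr) < \<sigma>))
     \<and>
     (pi / 2 < vertex_angle p q r \<and> vertex_angle p q r < pi \<and>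
      (tr - tq) / dist q r \<le> (1 - \<epsilon>) * \<sigma> * sin (vertex_angle p q r) \<longrightarrow>
        (\<forall>\<delta>. 0 \<le> \<delta> \<and> \<delta> \<le> \<epsilon> * infdist p (affine hull {q, r}) * \<sigma> \<longrightarrow>
           norm (tri_grad p q r (tp + \<delta>) tq tr) < \<sigma>))"
  using main_aux[OF nondeg ord sig grad eps] by blast

end
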